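(* Let $n\ge1$, $\Gamma\ge1$, $\varphi:(0,1)\to[0,\infty)$ and $\alpha\in(0,1)$. Let $x_0>0$ be $\mathcal{F}$-measurable with $(\sigma^\star_n)^2(x_0)>0$ almost surely. Then under $H_0(\Gamma)$, $$\mathbb{P}\big(\exists x\in(0,1): T^\star_n(x)\ge f^\star_{\alpha,n}(x)\,\big|\,\mathcal{F}\big)\le\alpha .$$
   Context: Paired observational study: $n$ pairs; in pair $i$, units $j=1,2$ have control potential outcome $R_{Cij}$, treated potential outcome $R_{Tij}$, treatment indicator $Z_{ij}\in\{0,1\}$; everything is conditional on exactly one unit per pair being treated. $\mathcal{F}$ is the $\sigma$-field generated by all potential outcomes. $R^{obs}_{ij}=Z_{ij}R_{Tij}+(1-Z_{ij})R_{Cij}$ and $Y_i=(Z_{i1}-Z_{i2})(R^{obs}_{i1}-R^{obs}_{i2})$. Ties among the $|Y_i|$ and zero values $Y_i=0$ are allowed. For $\Gamma\ge1$, $H_0(\Gamma)$ asserts: $R_{Tij}=R_{Cij}$ for all $i,j$; and conditional on $\mathcal{F}$, assignments are independent across pairs with $\frac1\Gamma\le \frac{\mathbb{P}(Z_{i1}=1\mid\mathcal{F})/\mathbb{P}(Z_{i1}=0\mid\mathcal{F})}{\mathbb{P}(Z_{i2}=1\mid\mathcal{F})/\mathbb{P}(Z_{i2}=0\mid\mathcal{F})}\le\Gamma$ for each $i$. Let $Y_{(1)},\dots,Y_{(n)}$ be any ordering of the $Y_i$ with $|Y_{(1)}|\le\dots\le|Y_{(n)}|$. For each $i$, let $\mathcal{J}_i=\{j\in[n]:|Y_{(j)}|=|Y_{(i)}|\}$,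 $m(i)=\min\mathcal{J}_i$, and $c^\star_i=|\mathcal{J}_i|^{-1}\sum_{j\in\mathcal{J}_i}\varphi(j/(n+1))$. Define $T^\star_n(x)=\sum_{\{i:\,m(i)\ge(1-x)(n+1)\}}c^\star_i\mathbf{1}\{Y_{(i)}>0\}$. Let $\rho_\Gamma=\Gamma/(1+\Gamma)$, $(\sigma^\star_n)^2(x)=\rho_\Gamma(1-\rho_\Gamma)\sum_{i=\lceil(1-x)(n+1)\rceil}^n(c^\star_i)^2$, $\lambda^\star_n=\sqrt{2\log(1/\alpha)/(\sigma^\star_n)^2(x_0)}$, and $f^\star_{\alpha,n}(x)=(\lambda^\star_n)^{-1}\big[\log(1/\alpha)+\sum_{i=\lceil(1-x)(n+1)\rceil}^n\log(1+\rho_\Gamma(e^{c^\star_i\lambda^\star_n}-1))\big]$. *)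

theory Defs
  imports "HOL-Probability.Probability"
begin

(* Pairs are indexed 1..n, units within a pair by j = 1,2.
   Conditional on F and on exactly one unit per pair being treated,
   the assignment of pair i is encoded by a boolean z i:
   z i = True  means  Z_i1 = 1, Z_i2 = 0;  z i = False means Z_i1 = 0, Z_i2 = 1. *)

definition Zind :: "(nat \<Rightarrow> bool) \<Rightarrow> nat \<Rightarrow> nat \<Rightarrow> real" where
  "Zind z i j = (if j = 1 then of_bool (z i) else of_bool (\<not> z i))"

definition Robs :: "(nat \<Rightarrow> nat \<Rightarrow> real) \<Rightarrow> (nat \<Rightarrow> nat \<Rightarrow> real) \<Rightarrow> (nat \<Rightarrow> bool)
                     \<Rightarrow> nat \<Rightarrow> nat \<Rightarrow> real" where
  "Robs RC RT z i j = Zind z i j * RT i j + (1 - Zind z i j) * RC i j"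

definition Ypair :: "(nat \<Rightarrow> nat \<Rightarrow> real) \<Rightarrow> (nat \<Rightarrow> nat \<Rightarrow> real) \<Rightarrow> (nat \<Rightarrow> bool)
                     \<Rightarrow> nat \<Rightarrow> real" where
  "Ypair RC RT z i = (Zind z i 1 - Zind z i 2) * (Robs RC RT z i 1 - Robs RC RT z i 2)"

definition is_abs_ordering :: "nat \<Rightarrow> (nat \<Rightarrow> real) \<Rightarrow> (nat \<Rightarrow> nat) \<Rightarrow> bool" where
  "is_abs_ordering n Y ord \<longleftrightarrow> bij_betw ord {1..n} {1..n} \<and>
     (\<forall>a\<in>{1..n}. \<forall>b\<in>{1..n}. a \<le> b \<longrightarrow> \<bar>Y (ord a)\<bar> \<le> \<bar>Y (ord b)\<bar>)"

(* In what follows Ys k stands for Y_(k), k = 1..n *)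
definition tie_set :: "nat \<Rightarrow> (nat \<Rightarrow> real) \<Rightarrow> nat \<Rightarrow> nat set" where
  "tie_set n Ys i = {j \<in> {1..n}. \<bar>Ys j\<bar> = \<bar>Ys i\<bar>}"

definition mtie :: "nat \<Rightarrow> (nat \<Rightarrow> real) \<Rightarrow> nat \<Rightarrow> nat" where
  "mtie n Ys i = Min (tie_set n Ys i)"

definition cstar :: "(real \<Rightarrow> real) \<Rightarrow> nat \<Rightarrow> (nat \<Rightarrow> real) \<Rightarrow> nat \<Rightarrow> real" where
  "cstar \<phi> n Ys i =
     (\<Sum>j\<in>tie_set n Ys i. \<phi> (real j / real (n + 1))) / real (card (tie_set n Ys i))"

definition Tstar :: "(real \<Rightarrow> real) \<Rightarrow> nat \<Rightarrow> (nat \<Rightarrow> real) \<Rightarrow> real \<Rightarrow> real" where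
  "Tstar \<phi> n Ys x =
     (\<Sum>i\<in>{i \<in> {1..n}. real (mtie n Ys i) \<ge> (1 - x) * (real n + 1)}.
        cstar \<phi> n Ys i * (if Ys i > 0 then 1 else 0))"

definition rhoG :: "real \<Rightarrow> real" where
  "rhoG \<Gamma> = \<Gamma> / (1 + \<Gamma>)"

definition upper_idx :: "nat \<Rightarrow> real \<Rightarrow> nat set" where
  "upper_idx n x = {i \<in> {1..n}. real i \<ge> (1 - x) * (real n + 1)}"

definition sigma2 :: "real \<Rightarrow> (real \<Rightarrow> real) \<Rightarrow> nat \<Rightarrow> (nat \<Rightarrow> real) \<Rightarrow> real \<Rightarrow> real" where
  "sigma2 \<Gamma> \<phi> n Ys x =
     rhoG \<Gamma> * (1 - rhoG \<Gamma>) * (\<Sum>i\<in>upper_idx n x. (cstar \<phi> n Ys i)\<^sup>2)"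

definition lambda_star :: "real \<Rightarrow> (real \<Rightarrow> real) \<Rightarrow> nat \<Rightarrow> real \<Rightarrow> (nat \<Rightarrow> real) \<Rightarrow> real \<Rightarrow> real" where
  "lambda_star \<Gamma> \<phi> n \<alpha> Ys x0 = sqrt (2 * ln (1 / \<alpha>) / sigma2 \<Gamma> \<phi> n Ys x0)"

definition f_star :: "real \<Rightarrow> (real \<Rightarrow> real) \<Rightarrow> nat \<Rightarrow> real \<Rightarrow> (nat \<Rightarrow> real) \<Rightarrow> real \<Rightarrow> real \<Rightarrow> real" where
  "f_star \<Gamma> \<phi> n \<alpha> Ys x0 x =
     (let lam = lambda_star \<Gamma> \<phi> n \<alpha> Ys x0 in
      (1 / lam) * (ln (1 / \<alpha>) +
        (\<Sum>i\<in>upper_idx n x. ln (1 + rhoG \<Gamma> * (exp (cstar \<phi> n Ys i * lam) - 1)))))"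

end

theory Submission
  imports Defs
begin


lemma emeasure_pmf_le_1: "emeasure (measure_pmf P) A \<le> 1"
  by (simp add: measure_pmf.emeasure_eq_measure measure_pmf.prob_le_1)

lemma ville_aux:
  fixes r :: "nat \<Rightarrow> real" and F :: "nat \<Rightarrow> bool \<Rightarrow> real" and q :: "nat \<Rightarrow> real"
  assumes "finite I" and cpos: "0 < c"
  shows "(\<forall>i\<in>I. 0 \<le> q i \<and> q i \<le> 1) \<longrightarrow> (\<forall>i\<in>I. \<forall>b. 0 \<le> F i b) \<longrightarrow>
     (\<forall>i\<in>I. F i True * q i + F i False * (1 - q i) \<le> 1) \<longrightarrow> (\<forall>s. 0 \<le> s \<longrightarrow>
     emeasure (Pi_pmf I d (\<lambda>i. bernoulli_pmf (q i)))
       {z. \<exists>t. c \<le> s * (\<Prod>i\<in>{i\<in>I. t \<le> r i}. F i (z i))} \<le> ennreal (s / c))"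
  using assms(1)
proof (induction I rule: finite_ranking_induct[where f = r])
  case empty
  show ?case
  proof (intro impI allI)
    fix s :: real assume s: "0 \<le> s"
    show "emeasure (Pi_pmf {} d (\<lambda>i. bernoulli_pmf (q i)))
       {z. \<exists>t. c \<le> s * (\<Prod>i\<in>{i\<in>{}. t \<le> r i}. F i (z i))} \<le> ennreal (s / c)"
    proof (cases "c \<le> s")
      case True
      then have "1 \<le> s / c" using cpos by simp
      then have one: "ennreal 1 \<le> ennreal (s / c)" using ennreal_leI by blast
      show ?thesis using order_trans[OF emeasure_pmf_le_1 one[unfolded ennreal_1]] by blast
    next
      case False
      then show ?thesis by simp
    qed
  qed
next
  case (insert x S)
  show ?case
  proof (intro impI allI)
    fix s :: real assume s: "0 \<le> s"
    assume q: "\<forall>i\<in>insert x S. 0 \<le> q i \<and> q i \<le> 1"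
      and F: "\<forall>i\<in>insert x S. \<forall>b. 0 \<le> F i b"
      and E: "\<forall>i\<in>insert x S. F i True * q i + F i False * (1 - q i) \<le> 1"
    have IH: "\<And>s. 0 \<le> s \<Longrightarrow> emeasure (Pi_pmf S d (\<lambda>i. bernoulli_pmf (q i)))
       {z. \<exists>t. c \<le> s * (\<Prod>i\<in>{i\<in>S. t \<le> r i}. F i (z i))} \<le> ennreal (s / c)"
      using insert.IH q F E by auto
    show "emeasure (Pi_pmf (insert x S) d (\<lambda>i. bernoulli_pmf (q i)))
       {z. \<exists>t. c \<le> s * (\<Prod>i\<in>{i\<in>insert x S. t \<le> r i}. F i (z i))} \<le> ennreal (s / c)"
    proof (cases "x \<in> S")
      case True
      then show ?thesis using IH s by (simp add: insert_absorb)
    next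
      case xS: False
      show ?thesis
      proof (cases "c \<le> s")
        case True
        then have "1 \<le> s / c" using cpos by simp
        then have one: "ennreal 1 \<le> ennreal (s / c)" using ennreal_leI by blast
        show ?thesis using order_trans[OF emeasure_pmf_le_1 one[unfolded ennreal_1]] by blast
      next
        case False
        define E' where "E' = {z. \<exists>t. c \<le> (s * F x (z x)) * (\<Prod>i\<in>{i\<in>S. t \<le> r i}. F i (z i))}"
        have sub: "{z. \<exists>t. c \<le> s * (\<Prod>i\<in>{i\<in>insert x S. t \<le> r i}. F i (z i))} \<subseteq> E'"
        proof
          fix z assume "z \<in> {z. \<exists>t. c \<le> s * (\<Prod>i\<in>{i\<in>insert x S. t \<le> r i}. F i (z i))}"
          then obtain t where t: "c \<le> s * (\<Prod>i\<in>{i\<in>insert x S. t \<le> r i}. F i (z i))" by auto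
          show "z \<in> E'"
          proof (cases "t \<le> r x")
            case True
            then have "{i\<in>insert x S. t \<le> r i} = insert x {i\<in>S. t \<le> r i}" by auto
            then have "(\<Prod>i\<in>{i\<in>insert x S. t \<le> r i}. F i (z i)) = F x (z x) * (\<Prod>i\<in>{i\<in>S. t \<le> r i}. F i (z i))"
              using xS insert.hyps(1) by simp
            then show ?thesis using t unfolding E'_def by (auto simp: mult.assoc)
          next
            case False
            then have emp: "{i\<in>insert x S. t \<le> r i} = {}" using insert.hyps(2) by force
            show ?thesis using t[unfolded emp] \<open>\<not> c \<le> s\<close> by simp
          qed
        qed
        have "emeasure (Pi_pmf (insert x S) d (\<lambda>i. bernoulli_pmf (q i))) E'
           = (\<integral>\<^sup>+y. emeasure (Pi_pmf S d (\<lambda>i. bernoulli_pmf (q i))) ((\<lambda>f. f(x:=y)) -` E') \<partial>bernoulli_pmf (q x))"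
          unfolding Pi_pmf_insert'[OF insert.hyps(1) xS] map_pmf_def[symmetric]
          by (simp only: emeasure_bind_pmf emeasure_map_pmf)
        also have "\<dots> \<le> (\<integral>\<^sup>+y. ennreal (s * F x y / c) \<partial>bernoulli_pmf (q x))"
        proof (rule nn_integral_mono)
          fix y
          have "(\<lambda>f. f(x:=y)) -` E' = {z. \<exists>t. c \<le> (s * F x y) * (\<Prod>i\<in>{i\<in>S. t \<le> r i}. F i (z i))}"
          proof -
            have pe: "\<And>f t. (\<Prod>i\<in>{i\<in>S. t \<le> r i}. F i (if i = x then y else f i)) = (\<Prod>i\<in>{i\<in>S. t \<le> r i}. F i (f i))"
              using xS by (intro prod.cong) auto
            show ?thesis unfolding E'_def by (auto simp: pe)
          qed
          then show "emeasure (Pi_pmf S d (\<lambda>i. bernoulli_pmf (q i))) ((\<lambda>f. f(x:=y)) -` E') \<le> ennreal (s * F x y / c)"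
            using IH[of "s * F x y"] s F by simp
        qed
        also have "\<dots> \<le> ennreal (s / c)"
        proof -
          have qx: "0 \<le> q x" "q x \<le> 1" using q by auto
          have Fx: "0 \<le> F x True" "0 \<le> F x False" using F by auto
          have "(\<integral>\<^sup>+y. ennreal (s * F x y / c) \<partial>bernoulli_pmf (q x))
             = ennreal (s * F x True / c) * ennreal (q x) + ennreal (s * F x False / c) * ennreal (1 - q x)"
            using qx by (subst nn_integral_bernoulli_pmf) auto
          also have "\<dots> = ennreal (s * F x True / c * q x) + ennreal (s * F x False / c * (1 - q x))"
            using qx Fx s cpos ennreal_mult[of "s * F x True / c" "q x"] ennreal_mult[of "s * F x False / c" "1 - q x"] by simp
          also have "\<dots> = ennreal (s * F x True / c * q x + s * F x False / c * (1 - q x))"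
            using qx Fx s cpos by (subst ennreal_plus) auto
          also have "\<dots> \<le> ennreal (s / c)"
          proof (rule ennreal_leI)
            have "s * F x True / c * q x + s * F x False / c * (1 - q x)
                = s / c * (F x True * q x + F x False * (1 - q x))" using cpos by (simp add: field_simps)
            also have "\<dots> \<le> s / c * 1"
              using E s cpos by (intro mult_left_mono) auto
            finally show "s * F x True / c * q x + s * F x False / c * (1 - q x) \<le> s / c" by simp
          qed
          finally show ?thesis .
        qed
        finally show ?thesis using sub emeasure_mono[OF sub, of "measure_pmf (Pi_pmf (insert x S) d (\<lambda>i. bernoulli_pmf (q i)))"]
          by simp
      qed
    qed
  qed
qed


lemma prefix_lemma:
  fixes P :: "nat set"
  assumes "P \<subseteq> {1..n}" "\<forall>j\<in>P. \<forall>j'. 1 \<le> j' \<and> j' \<le> j \<longrightarrow> j' \<in> P" "j \<in> {1..n}"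
  shows "j \<in> P \<longleftrightarrow> j \<le> card P"
proof
  assume "j \<in> P"
  then have "{1..j} \<subseteq> P" using assms(2) by auto
  then have "card {1..j} \<le> card P" using assms(1) finite_subset[OF assms(1)] by (intro card_mono) auto
  then show "j \<le> card P" by simp
next
  assume jc: "j \<le> card P"
  show "j \<in> P"
  proof (rule ccontr)
    assume nj: "j \<notin> P"
    have "P \<subseteq> {1..j-1}"
    proof
      fix p assume pP: "p \<in> P"
      have "1 \<le> p" using pP assms(1) by auto
      moreover have "p < j"
      proof (rule ccontr)
        assume "\<not> p < j"
        then have "j \<in> P" using assms(2) pP assms(3) by auto
        then show False using nj by simp
      qed
      ultimately show "p \<in> {1..j-1}" by auto
    qed
    then have "card P \<le> card {1..j-1}" by (intro card_mono) auto
    then show False using jc assms(3) by auto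
  qed
qed

lemma bij_image_filter:
  assumes "bij_betw \<sigma> I I"
  shows "\<sigma> ` {k\<in>I. R (\<sigma> k)} = {i\<in>I. R i}"
  using assms unfolding bij_betw_def by auto

lemma bij_card_filter:
  assumes "bij_betw \<sigma> I I"
  shows "card {k\<in>I. R (\<sigma> k)} = card {i\<in>I. R i}"
proof -
  have "inj_on \<sigma> {k\<in>I. R (\<sigma> k)}" using assms unfolding bij_betw_def by (auto intro: inj_on_subset)
  then have "card (\<sigma> ` {k\<in>I. R (\<sigma> k)}) = card {k\<in>I. R (\<sigma> k)}" by (rule card_image)
  then show ?thesis using bij_image_filter[OF assms] by simp
qed

lemma sorted_down:
  fixes A :: "nat \<Rightarrow> real" and Q :: "real \<Rightarrow> bool"
  assumes bij: "bij_betw \<sigma> {1..n} {1..n}"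
    and srt: "\<forall>a\<in>{1..n}. \<forall>b\<in>{1..n}. a \<le> b \<longrightarrow> A (\<sigma> a) \<le> A (\<sigma> b)"
    and Qm: "\<And>u w. u \<le> w \<Longrightarrow> Q w \<Longrightarrow> Q u"
    and j: "j \<in> {1..n}"
  shows "Q (A (\<sigma> j)) \<longleftrightarrow> j \<le> card {i\<in>{1..n}. Q (A i)}"
proof -
  let ?P = "{k\<in>{1..n}. Q (A (\<sigma> k))}"
  have "j \<in> ?P \<longleftrightarrow> j \<le> card ?P"
  proof (rule prefix_lemma[OF _ _ j])
    show "?P \<subseteq> {1..n}" by auto
    show "\<forall>j\<in>?P. \<forall>j'. 1 \<le> j' \<and> j' \<le> j \<longrightarrow> j' \<in> ?P"
    proof (intro ballI allI impI)
      fix j0 j' assume h: "j0 \<in> ?P" "1 \<le> j' \<and> j' \<le> j0"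
      then have "j' \<in> {1..n}" by auto
      moreover have "A (\<sigma> j') \<le> A (\<sigma> j0)" using srt h \<open>j' \<in> {1..n}\<close> by auto
      ultimately show "j' \<in> ?P" using Qm h by auto
    qed
  qed
  moreover have "card ?P = card {i\<in>{1..n}. Q (A i)}" by (rule bij_card_filter[OF bij])
  ultimately show ?thesis using j by auto
qed

lemma sorted_invariant:
  fixes A :: "nat \<Rightarrow> real"
  assumes bij: "bij_betw \<sigma> {1..n} {1..n}"
    and srt: "\<forall>a\<in>{1..n}. \<forall>b\<in>{1..n}. a \<le> b \<longrightarrow> A (\<sigma> a) \<le> A (\<sigma> b)"
    and bij': "bij_betw \<tau> {1..n} {1..n}"
    and srt': "\<forall>a\<in>{1..n}. \<forall>b\<in>{1..n}. a \<le> b \<longrightarrow> A (\<tau> a) \<le> A (\<tau> b)"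
    and j: "j \<in> {1..n}"
  shows "A (\<sigma> j) = A (\<tau> j)"
proof -
  have key: "\<And>v. A (\<sigma> j) < v \<longleftrightarrow> A (\<tau> j) < v"
  proof -
    fix v
    have "A (\<sigma> j) < v \<longleftrightarrow> j \<le> card {i\<in>{1..n}. A i < v}"
      by (rule sorted_down[OF bij srt _ j, where Q = "\<lambda>w. w < v"]) auto
    moreover have "A (\<tau> j) < v \<longleftrightarrow> j \<le> card {i\<in>{1..n}. A i < v}"
      by (rule sorted_down[OF bij' srt' _ j, where Q = "\<lambda>w. w < v"]) auto
    ultimately show "A (\<sigma> j) < v \<longleftrightarrow> A (\<tau> j) < v" by simp
  qed
  show ?thesis
  proof (rule ccontr)
    assume "A (\<sigma> j) \<noteq> A (\<tau> j)"
    then consider "A (\<sigma> j) < A (\<tau> j)" | "A (\<tau> j) < A (\<sigma> j)" by linarith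
    then show False using key by (metis less_irrefl)
  qed
qed

lemma tie_char:
  fixes A :: "nat \<Rightarrow> real"
  assumes bij: "bij_betw \<sigma> {1..n} {1..n}"
    and srt: "\<forall>a\<in>{1..n}. \<forall>b\<in>{1..n}. a \<le> b \<longrightarrow> A (\<sigma> a) \<le> A (\<sigma> b)"
  shows "{j\<in>{1..n}. A (\<sigma> j) = v} =
     {card {i\<in>{1..n}. A i < v}<..card {i\<in>{1..n}. A i \<le> v}}"
proof -
  have hi: "card {i\<in>{1..n}. A i \<le> v} \<le> n"
  proof -
    have "{i\<in>{1..n}. A i \<le> v} \<subseteq> {1..n}" by auto
    then have "card {i\<in>{1..n}. A i \<le> v} \<le> card {1..n}" by (intro card_mono) auto
    then show ?thesis by simp
  qed
  have "\<And>j. j \<in> {1..n} \<Longrightarrow> (A (\<sigma> j) = v \<longleftrightarrow>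
      \<not> j \<le> card {i\<in>{1..n}. A i < v} \<and> j \<le> card {i\<in>{1..n}. A i \<le> v})"
  proof -
    fix j assume j: "j \<in> {1..n}"
    have 1: "A (\<sigma> j) < v \<longleftrightarrow> j \<le> card {i\<in>{1..n}. A i < v}"
      by (rule sorted_down[OF bij srt _ j, where Q = "\<lambda>w. w < v"]) auto
    have 2: "A (\<sigma> j) \<le> v \<longleftrightarrow> j \<le> card {i\<in>{1..n}. A i \<le> v}"
      by (rule sorted_down[OF bij srt _ j, where Q = "\<lambda>w. w \<le> v"]) auto
    show "(A (\<sigma> j) = v \<longleftrightarrow> \<not> j \<le> card {i\<in>{1..n}. A i < v} \<and> j \<le> card {i\<in>{1..n}. A i \<le> v})"
      using 1 2 by linarith
  qed
  note H = this
  show ?thesis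
  proof (rule set_eqI)
    fix j
    show "j \<in> {j\<in>{1..n}. A (\<sigma> j) = v} \<longleftrightarrow> j \<in> {card {i\<in>{1..n}. A i < v}<..card {i\<in>{1..n}. A i \<le> v}}"
    proof (cases "j \<in> {1..n}")
      case True
      then show ?thesis using H[OF True] by auto
    next
      case False
      then show ?thesis using hi by auto
    qed
  qed
qed

lemma Fbound:
  fixes c lam \<rho> p d :: real
  assumes "0 \<le> c" "0 < lam" "0 \<le> \<rho>" "p \<le> \<rho>" "1 - p \<le> \<rho>" "0 \<le> p" "p \<le> 1"
  shows "exp (lam * (c * (if (if True then d else -d) > 0 then 1 else 0)) - ln (1 + \<rho> * (exp (c * lam) - 1))) * p
    + exp (lam * (c * (if (if False then d else -d) > 0 then 1 else 0)) - ln (1 + \<rho> * (exp (c * lam) - 1))) * (1 - p) \<le> 1"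
proof -
  define e where "e = exp (c * lam)"
  have e1: "1 \<le> e" unfolding e_def using assms by simp
  define H where "H = 1 + \<rho> * (e - 1)"
  have H1: "1 \<le> H" unfolding H_def using e1 assms by simp
  have ex1: "exp (lam * (c * 1) - ln H) = e / H" using H1 by (simp add: exp_diff e_def mult.commute)
  have ex2: "exp (c * lam - ln H) = e / H" "exp (lam * c - ln H) = e / H" using H1 by (simp_all add: exp_diff e_def mult.commute)
  have ex0: "exp (lam * (c * 0) - ln H) = 1 / H" using H1 by (simp add: exp_minus inverse_eq_divide)
  have re: "\<rho> \<le> \<rho> * e" using mult_left_mono[OF e1, of \<rho>] assms by simp
  have "p * (e - 1) \<le> \<rho> * (e - 1)" "(1 - p) * (e - 1) \<le> \<rho> * (e - 1)"
    using e1 assms by (auto intro: mult_right_mono)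
  then have b1: "e * p + (1 - p) \<le> H" and b2: "p + e * (1 - p) \<le> H" and b3: "p + (1 - p) \<le> H"
    unfolding H_def using H1 re by (auto simp: algebra_simps)
  have d1: "(e * p + (1 - p)) / H \<le> 1" and d2: "(p + e * (1 - p)) / H \<le> 1" and d3: "(p + (1 - p)) / H \<le> 1"
    using b1 b2 b3 H1 by simp_all
  have ex1': "exp (lam * c - ln H) = e / H" "exp (- ln H) = 1 / H" using ex2 ex0 by simp_all
  consider "d > 0" | "d < 0" | "d = 0" by linarith
  then show ?thesis
  proof cases
    case 1
    then have "\<not> -d > 0" by simp
    then show ?thesis using 1 d1 unfolding e_def[symmetric] H_def[symmetric]
      by (simp add: ex1' add_divide_distrib)
  next
    case 2
    then show ?thesis using d2 unfolding e_def[symmetric] H_def[symmetric]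
      by (simp add: ex1' add_divide_distrib)
  next
    case 3
    have "p / H + (1 - p) / H = 1 / H" by (simp add: add_divide_distrib[symmetric])
    then show ?thesis using 3 d3 unfolding e_def[symmetric] H_def[symmetric]
      by (simp add: ex1')
  qed
qed


lemma Min_gAM: "(lo::nat) < hi \<Longrightarrow> Min {lo<..hi} = Suc lo"
  by (rule Min_eqI) auto

theorem theorem4:
  fixes n :: nat and \<Gamma> \<alpha> x0 :: real and \<phi> :: "real \<Rightarrow> real"
    and RC RT :: "nat \<Rightarrow> nat \<Rightarrow> real" and p :: "nat \<Rightarrow> real"
    and \<sigma> :: "(nat \<Rightarrow> bool) \<Rightarrow> nat \<Rightarrow> nat"
  assumes n_pos: "n \<ge> 1"
    and Gamma: "\<Gamma> \<ge> 1"
    and phi_nonneg: "\<forall>t\<in>{0<..<1}. \<phi> t \<ge> 0"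
    and alpha: "0 < \<alpha>" "\<alpha> < 1"
    and x0_pos: "x0 > 0"
    and H0_null: "\<forall>i\<in>{1..n}. \<forall>j\<in>{1,2}. RT i j = RC i j"
    and H0_bias: "\<forall>i\<in>{1..n}. 1 / (1 + \<Gamma>) \<le> p i \<and> p i \<le> \<Gamma> / (1 + \<Gamma>)"
    and ordering: "\<forall>z. is_abs_ordering n (Ypair RC RT z) (\<sigma> z)"
    and var_pos: "\<forall>z. sigma2 \<Gamma> \<phi> n (Ypair RC RT z \<circ> \<sigma> z) x0 > 0"
  shows "measure_pmf.prob (Pi_pmf {1..n} False (\<lambda>i. bernoulli_pmf (p i)))
           {z. \<exists>x\<in>{0<..<1}. Tstar \<phi> n (Ypair RC RT z \<circ> \<sigma> z) x
                 \<ge> f_star \<Gamma> \<phi> n \<alpha> (Ypair RC RT z \<circ> \<sigma> z) x0 x} \<le> \<alpha>"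
proof -
  define D where "D i = RC i 1 - RC i 2" for i
  define A where "A i = \<bar>D i\<bar>" for i
  define Ys where "Ys z = Ypair RC RT z \<circ> \<sigma> z" for z
  define LO where "LO v = card {i\<in>{1..n}. A i < v}" for v
  define HI where "HI v = card {i\<in>{1..n}. A i \<le> v}" for v
  define a where "a v = (\<Sum>j\<in>{LO v<..HI v}. \<phi> (real j / real (n + 1))) / real (card {LO v<..HI v})" for v
  define \<rho> where "\<rho> = rhoG \<Gamma>"
  define z0 where "z0 = (\<lambda>_::nat. False)"
  define lam where "lam = lambda_star \<Gamma> \<phi> n \<alpha> (Ys z0) x0"
  define h where "h c = ln (1 + \<rho> * (exp (c * lam) - 1))" for c
  define g where "g z i = a (A i) * (if Ypair RC RT z i > 0 then 1 else 0)" for z i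
  define F where "F i b = exp (lam * (a (A i) * (if (if b then D i else - D i) > 0 then 1 else 0)) - h (a (A i)))" for i b
  define r where "r i = real (Suc (LO (A i)))" for i

  have Yeq: "\<And>z i. i \<in> {1..n} \<Longrightarrow> Ypair RC RT z i = (if z i then D i else - D i)"
    using H0_null by (auto simp: Ypair_def Robs_def Zind_def D_def)
  have absY: "\<And>z i. i \<in> {1..n} \<Longrightarrow> \<bar>Ypair RC RT z i\<bar> = A i"
    using Yeq by (auto simp: A_def)
  have bij: "\<And>z. bij_betw (\<sigma> z) {1..n} {1..n}"
    using ordering by (auto simp: is_abs_ordering_def)
  have sin: "\<And>z k. k \<in> {1..n} \<Longrightarrow> \<sigma> z k \<in> {1..n}"
    using bij bij_betwE by blast
  have srt: "\<And>z. \<forall>a\<in>{1..n}. \<forall>b\<in>{1..n}. a \<le> b \<longrightarrow> A (\<sigma> z a) \<le> A (\<sigma> z b)"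
  proof (intro ballI impI)
    fix z a b assume ab: "a \<in> {1..n}" "b \<in> {1..n}" "a \<le> b"
    then have "\<bar>Ypair RC RT z (\<sigma> z a)\<bar> \<le> \<bar>Ypair RC RT z (\<sigma> z b)\<bar>"
      using ordering by (auto simp: is_abs_ordering_def)
    then show "A (\<sigma> z a) \<le> A (\<sigma> z b)" using absY sin ab by simp
  qed
  have absYs: "\<And>z k. k \<in> {1..n} \<Longrightarrow> \<bar>Ys z k\<bar> = A (\<sigma> z k)"
    using absY sin by (simp add: Ys_def)
  have tie: "\<And>z k. k \<in> {1..n} \<Longrightarrow> tie_set n (Ys z) k = {LO (A (\<sigma> z k))<..HI (A (\<sigma> z k))}"
  proof -
    fix z k assume k: "k \<in> {1..n}"
    have "tie_set n (Ys z) k = {j\<in>{1..n}. A (\<sigma> z j) = A (\<sigma> z k)}"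
      unfolding tie_set_def using absYs k by auto
    also have "\<dots> = {LO (A (\<sigma> z k))<..HI (A (\<sigma> z k))}"
      unfolding LO_def HI_def by (rule tie_char[OF bij srt])
    finally show "tie_set n (Ys z) k = {LO (A (\<sigma> z k))<..HI (A (\<sigma> z k))}" .
  qed
  have kin: "\<And>z k. k \<in> {1..n} \<Longrightarrow> LO (A (\<sigma> z k)) < k \<and> k \<le> HI (A (\<sigma> z k))"
  proof -
    fix z k assume k: "k \<in> {1..n}"
    have "k \<in> tie_set n (Ys z) k" unfolding tie_set_def using k by auto
    then show "LO (A (\<sigma> z k)) < k \<and> k \<le> HI (A (\<sigma> z k))" using tie[OF k] by auto
  qed
  have cst: "\<And>z k. k \<in> {1..n} \<Longrightarrow> cstar \<phi> n (Ys z) k = a (A (\<sigma> z k))"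
    unfolding cstar_def a_def using tie by simp
  have mt: "\<And>z k. k \<in> {1..n} \<Longrightarrow> mtie n (Ys z) k = Suc (LO (A (\<sigma> z k)))"
  proof -
    fix z k assume k: "k \<in> {1..n}"
    have "LO (A (\<sigma> z k)) < HI (A (\<sigma> z k))" using kin[of k z] k by auto
    then show "mtie n (Ys z) k = Suc (LO (A (\<sigma> z k)))"
      unfolding mtie_def tie[OF k] by (rule Min_gAM)
  qed
  have inv: "\<And>z k. k \<in> {1..n} \<Longrightarrow> A (\<sigma> z k) = A (\<sigma> z0 k)"
    by (rule sorted_invariant[OF bij srt bij srt])
  have cst0: "\<And>z k. k \<in> {1..n} \<Longrightarrow> cstar \<phi> n (Ys z) k = cstar \<phi> n (Ys z0) k"
  proof -
    fix z k assume k: "k \<in> {1..n}"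
    have "cstar \<phi> n (Ys z) k = a (A (\<sigma> z k))" using cst k by blast
    also have "\<dots> = a (A (\<sigma> z0 k))" using inv k by metis
    also have "\<dots> = cstar \<phi> n (Ys z0) k" using cst k by metis
    finally show "cstar \<phi> n (Ys z) k = cstar \<phi> n (Ys z0) k" .
  qed
  have upper_sub: "\<And>x. upper_idx n x \<subseteq> {1..n}" by (auto simp: upper_idx_def)
  have sig: "\<And>z. sigma2 \<Gamma> \<phi> n (Ys z) x0 = sigma2 \<Gamma> \<phi> n (Ys z0) x0"
    proof -
    fix z
    have "(\<Sum>i\<in>upper_idx n x0. (cstar \<phi> n (Ys z) i)\<^sup>2) = (\<Sum>i\<in>upper_idx n x0. (cstar \<phi> n (Ys z0) i)\<^sup>2)"
    proof (intro sum.cong refl)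
      fix i assume "i \<in> upper_idx n x0"
      then have "i \<in> {1..n}" using upper_sub by blast
      then have "cstar \<phi> n (Ys z) i = cstar \<phi> n (Ys z0) i" using cst0 by blast
      then show "(cstar \<phi> n (Ys z) i)\<^sup>2 = (cstar \<phi> n (Ys z0) i)\<^sup>2" by simp
    qed
    then show "sigma2 \<Gamma> \<phi> n (Ys z) x0 = sigma2 \<Gamma> \<phi> n (Ys z0) x0" unfolding sigma2_def by simp
  qed
  have lamz: "\<And>z. lambda_star \<Gamma> \<phi> n \<alpha> (Ys z) x0 = lam"
    unfolding lambda_star_def lam_def using sig by simp
  have lnpos: "ln (1 / \<alpha>) > 0" using alpha by simp
  have lam_pos: "lam > 0"
    unfolding lam_def lambda_star_def using var_pos lnpos by (simp add: Ys_def)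
  have HIn: "\<And>v. HI v \<le> n"
  proof -
    fix v
    have "{i\<in>{1..n}. A i \<le> v} \<subseteq> {1..n}" by auto
    then have "card {i\<in>{1..n}. A i \<le> v} \<le> card {1..n}" by (intro card_mono) auto
    then show "HI v \<le> n" by (simp add: HI_def)
  qed
  have a_nonneg: "\<And>v. a v \<ge> 0"
  proof -
    fix v
    have "\<forall>j\<in>{LO v<..HI v}. \<phi> (real j / real (n + 1)) \<ge> 0"
    proof
      fix j assume j: "j \<in> {LO v<..HI v}"
      then have "1 \<le> j" "j \<le> n" using HIn[of v] by auto
      then have "real j / real (n + 1) \<in> {0<..<1}" by (auto simp: field_simps)
      then show "\<phi> (real j / real (n + 1)) \<ge> 0" using phi_nonneg by blast
    qed
    then show "a v \<ge> 0" unfolding a_def by (intro divide_nonneg_nonneg sum_nonneg) auto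
  qed
  have rho: "\<rho> = \<Gamma> / (1 + \<Gamma>)" by (simp add: \<rho>_def rhoG_def)
  have rho_pos: "0 < \<rho>" using Gamma rho by simp
  have h_nonneg: "\<And>c. c \<ge> 0 \<Longrightarrow> h c \<ge> 0"
  proof -
    fix c :: real assume c: "c \<ge> 0"
    have "1 \<le> exp (c * lam)" using c lam_pos by simp
    then have "1 \<le> 1 + \<rho> * (exp (c * lam) - 1)" using rho_pos by simp
    then show "h c \<ge> 0" unfolding h_def by simp
  qed
  have p01: "\<forall>i\<in>{1..n}. 0 \<le> p i \<and> p i \<le> 1"
  proof
    fix i assume i: "i \<in> {1..n}"
    have "0 < 1 / (1 + \<Gamma>)" using Gamma by simp
    moreover have "\<Gamma> / (1 + \<Gamma>) \<le> 1" using Gamma by simp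
    moreover have "1 / (1 + \<Gamma>) \<le> p i \<and> p i \<le> \<Gamma> / (1 + \<Gamma>)" using H0_bias i by blast
    ultimately show "0 \<le> p i \<and> p i \<le> 1" by linarith
  qed
  have pr: "\<forall>i\<in>{1..n}. p i \<le> \<rho> \<and> 1 - p i \<le> \<rho>"
  proof
    fix i assume i: "i \<in> {1..n}"
    have "1 - 1 / (1 + \<Gamma>) = \<rho>" using Gamma rho by (simp add: field_simps)
    moreover have "1 / (1 + \<Gamma>) \<le> p i \<and> p i \<le> \<Gamma> / (1 + \<Gamma>)" using H0_bias i by blast
    ultimately show "p i \<le> \<rho> \<and> 1 - p i \<le> \<rho>" using rho by linarith
  qed
  have Fnn: "\<forall>i\<in>{1..n}. \<forall>b. 0 \<le> F i b" by (simp add: F_def)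
  have FE: "\<forall>i\<in>{1..n}. F i True * p i + F i False * (1 - p i) \<le> 1"
  proof
    fix i assume i: "i \<in> {1..n}"
    show "F i True * p i + F i False * (1 - p i) \<le> 1"
      unfolding F_def h_def
      by (rule Fbound[OF a_nonneg lam_pos]) (use p01 pr rho_pos i in auto)
  qed
  have ville: "emeasure (Pi_pmf {1..n} False (\<lambda>i. bernoulli_pmf (p i)))
       {z. \<exists>t. 1 / \<alpha> \<le> 1 * (\<Prod>i\<in>{i\<in>{1..n}. t \<le> r i}. F i (z i))} \<le> ennreal (1 / (1 / \<alpha>))"
  proof -
    have c: "0 < 1 / \<alpha>" using alpha by simp
    show ?thesis
      using ville_aux[OF finite_atLeastAtMost[of 1 n] c, where q=p and F=F and d=False and r=r, rule_format, OF p01[rule_format] Fnn[rule_format] FE[rule_format], where s=1] by simp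
  qed

  have incl: "{z. \<exists>x\<in>{0<..<1}. Tstar \<phi> n (Ypair RC RT z \<circ> \<sigma> z) x
                 \<ge> f_star \<Gamma> \<phi> n \<alpha> (Ypair RC RT z \<circ> \<sigma> z) x0 x}
     \<subseteq> {z. \<exists>t. 1 / \<alpha> \<le> 1 * (\<Prod>i\<in>{i\<in>{1..n}. t \<le> r i}. F i (z i))}"
  proof
    fix z assume "z \<in> {z. \<exists>x\<in>{0<..<1}. Tstar \<phi> n (Ypair RC RT z \<circ> \<sigma> z) x
                 \<ge> f_star \<Gamma> \<phi> n \<alpha> (Ypair RC RT z \<circ> \<sigma> z) x0 x}"
    then obtain x where x: "x \<in> {0<..<1}" and Tf: "Tstar \<phi> n (Ys z) x \<ge> f_star \<Gamma> \<phi> n \<alpha> (Ys z) x0 x"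
      by (auto simp: Ys_def)
    define t where "t = (1 - x) * (real n + 1)"
    define S where "S = {i\<in>{1..n}. t \<le> r i}"
    define U where "U = upper_idx n x"
    have injz: "inj_on (\<sigma> z) {1..n}" using bij[of z] by (simp add: bij_betw_def)
    have Tsum: "Tstar \<phi> n (Ys z) x = (\<Sum>i\<in>S. g z i)"
    proof -
      define K where "K = {k\<in>{1..n}. t \<le> r (\<sigma> z k)}"
      have Keq: "{i \<in> {1..n}. real (mtie n (Ys z) i) \<ge> (1 - x) * (real n + 1)} = K"
        unfolding K_def
      proof (rule Collect_cong)
        fix k
        show "(k \<in> {1..n} \<and> (1 - x) * (real n + 1) \<le> real (mtie n (Ys z) k)) = (k \<in> {1..n} \<and> t \<le> r (\<sigma> z k))"
        proof (cases "k \<in> {1..n}")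
          case True
          then have "mtie n (Ys z) k = Suc (LO (A (\<sigma> z k)))" using mt by blast
          then show ?thesis using True by (simp add: r_def t_def)
        next
          case False
          then show ?thesis by blast
        qed
      qed
      have "Tstar \<phi> n (Ys z) x = (\<Sum>k\<in>K. cstar \<phi> n (Ys z) k * (if Ys z k > 0 then 1 else 0))"
        unfolding Tstar_def Keq by simp
      also have "\<dots> = (\<Sum>k\<in>K. g z (\<sigma> z k))"
      proof (intro sum.cong refl)
        fix k assume "k \<in> K"
        then have k: "k \<in> {1..n}" by (simp add: K_def)
        have "cstar \<phi> n (Ys z) k = a (A (\<sigma> z k))" using cst k by blast
        then show "cstar \<phi> n (Ys z) k * (if Ys z k > 0 then 1 else 0) = g z (\<sigma> z k)"
          by (simp add: g_def Ys_def)
      qed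
      also have "\<dots> = (\<Sum>i\<in>\<sigma> z ` K. g z i)"
        by (rule sum.reindex[symmetric, unfolded comp_def]) (rule inj_on_subset[OF injz], auto simp: K_def)
      also have "\<sigma> z ` K = S"
        unfolding K_def S_def by (rule bij_image_filter[OF bij])
      finally show ?thesis .
    qed
    have Ssub: "S \<subseteq> \<sigma> z ` U"
    proof
      fix i assume i: "i \<in> S"
      then have i1: "i \<in> {1..n}" and ti: "t \<le> r i" by (auto simp: S_def)
      have "i \<in> \<sigma> z ` {1..n}" using bij[of z] i1 by (simp add: bij_betw_def)
      then obtain k where k: "k \<in> {1..n}" "\<sigma> z k = i" by (metis imageE)
      have "LO (A (\<sigma> z k)) < k" using kin k(1) by blast
      then have "r i \<le> real k" using k(2) by (simp add: r_def)
      then have "k \<in> U" using ti k(1) by (simp add: U_def upper_idx_def t_def)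
      then show "i \<in> \<sigma> z ` U" using k(2) by blast
    qed
    have fsum: "f_star \<Gamma> \<phi> n \<alpha> (Ys z) x0 x = (1 / lam) * (ln (1 / \<alpha>) + (\<Sum>i\<in>\<sigma> z ` U. h (a (A i))))"
    proof -
      have "f_star \<Gamma> \<phi> n \<alpha> (Ys z) x0 x = (1 / lam) * (ln (1 / \<alpha>) + (\<Sum>k\<in>U. h (cstar \<phi> n (Ys z) k)))"
        unfolding f_star_def Let_def lamz U_def h_def \<rho>_def by simp
      also have "(\<Sum>k\<in>U. h (cstar \<phi> n (Ys z) k)) = (\<Sum>k\<in>U. h (a (A (\<sigma> z k))))"
      proof (intro sum.cong refl)
        fix k assume "k \<in> U"
        then have k: "k \<in> {1..n}" using upper_sub U_def by blast
        have "cstar \<phi> n (Ys z) k = a (A (\<sigma> z k))" using cst k by blast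
        then show "h (cstar \<phi> n (Ys z) k) = h (a (A (\<sigma> z k)))" by simp
      qed
      also have "\<dots> = (\<Sum>i\<in>\<sigma> z ` U. h (a (A i)))"
        by (rule sum.reindex[symmetric, unfolded comp_def]) (rule inj_on_subset[OF injz], use upper_sub U_def in blast)
      finally show ?thesis .
    qed
    have "(\<Sum>i\<in>S. h (a (A i))) \<le> (\<Sum>i\<in>\<sigma> z ` U. h (a (A i)))"
    proof (rule sum_mono2)
      have "finite U" unfolding U_def using upper_sub[of x] finite_subset by blast
      then show "finite (\<sigma> z ` U)" by simp
    qed (use Ssub h_nonneg a_nonneg in auto)
    then have "ln (1 / \<alpha>) + (\<Sum>i\<in>S. h (a (A i))) \<le> lam * Tstar \<phi> n (Ys z) x"
      using Tf fsum lam_pos by (simp add: field_simps)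
    then have ineq: "ln (1 / \<alpha>) \<le> (\<Sum>i\<in>S. lam * g z i - h (a (A i)))"
      using Tsum by (simp add: sum_subtractf sum_distrib_left)
    have "(\<Prod>i\<in>S. F i (z i)) = (\<Prod>i\<in>S. exp (lam * g z i - h (a (A i))))"
      by (intro prod.cong) (auto simp: F_def g_def S_def Yeq)
    also have "\<dots> = exp (\<Sum>i\<in>S. lam * g z i - h (a (A i)))"
      by (simp add: exp_sum S_def)
    also have "\<dots> \<ge> exp (ln (1 / \<alpha>))" using ineq by simp
    finally have "1 / \<alpha> \<le> (\<Prod>i\<in>S. F i (z i))" using alpha by simp
    then show "z \<in> {z. \<exists>t. 1 / \<alpha> \<le> 1 * (\<Prod>i\<in>{i\<in>{1..n}. t \<le> r i}. F i (z i))}"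
      unfolding S_def by auto
  qed
  have "emeasure (Pi_pmf {1..n} False (\<lambda>i. bernoulli_pmf (p i)))
          {z. \<exists>x\<in>{0<..<1}. Tstar \<phi> n (Ypair RC RT z \<circ> \<sigma> z) x
                 \<ge> f_star \<Gamma> \<phi> n \<alpha> (Ypair RC RT z \<circ> \<sigma> z) x0 x} \<le> ennreal \<alpha>"
    using order_trans[OF emeasure_mono[OF incl] ville] alpha by simp
  then show ?thesis using alpha
    by (simp add: measure_pmf.emeasure_eq_measure)
qed

end
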